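(* Let $W\in\{\mathrm{A}_{\frac12\infty},\mathrm{D}_{\frac12\infty}\}$. The endomorphisms $\dot J_W$, ${}^t\dot J_W$ of $H_{W,\mathbb{C}}$ and their inverses extend to bounded operators on the Hilbert space $\overline H_{W,\mathbb{C}}$, and the extensions of $\dot J_W$ and ${}^t\dot J_W$ (resp. of their inverses) are adjoint (transpose) to each other with respect to $\langle\cdot,\cdot\rangle$.
   Context: Index sets: $C_{W,0}=\{c_0^{(n)}:n\ge1\}$ for $W=\mathrm{A}_{\frac12\infty}$ and $C_{W,0}=\{c_0^{(n)}:n\ge1\}\cup\{c_0^+,c_0^-\}$ for $W=\mathrm{D}_{\frac12\infty}$; $C_{W,1}=\{c_1^{(n)}:n\ge1\}$; $C_W=C_{W,0}\sqcup C_{W,1}$. Adjacency: $c_0^{(n)}$ is adjacent to $c_1^{(n)}$ and $c_1^{(n+1)}$ for all $n\ge1$, and (type D only) $c_0^{\pm}$ are adjacent to $c_1^{(1)}$; no other adjacencies. (Geometrically these are the critical points of $f_W$, with $c\in C_{W,0}$ adjacent to $c'\in C_{W,1}$ iff $c$ lies in the closure of the bounded region of the real zero set containing $c'$.) $H_W=\bigoplus_{c\in C_W}\mathbb{Z}\gamma_c$, $H_{W,i}=\bigoplus_{c\in C_{W,i}}\mathbb{Z}\gamma_c$, $H_{W,\mathbb{C}}=H_W\otimes\mathbb{C}$ with Hermitian product $\langle\sum a_c\gamma_c,\sum b_c\gamma_c\rangle=\sum a_c\bar b_c$; $\overline H_{W,\mathbb{C}}$ is its $\ell^2$-completion. $J_W$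 is the bilinear form with $J_W(\gamma_c,\gamma_{c'})=1$ if $c=c'$, $-1$ if $c\in C_{W,0}$, $c'\in C_{W,1}$ adjacent, $0$ otherwise; ${}^tJ_W(\xi,\eta)=J_W(\eta,\xi)$. The associated endomorphisms are $\dot J_W(u)=\sum_{c\in C_W}J_W(u,\gamma_c)\gamma_c$ and ${}^t\dot J_W(u)=\sum_{c}{}^tJ_W(u,\gamma_c)\gamma_c$ (finite sums by local finiteness). *)

theory Defs
  imports "HOL-Analysis.Analysis"
begin

datatype diag = A_half_inf | D_half_inf

text \<open>Critical points: c_0^(n), c_1^(n) (n >= 1), and c_0^+, c_0^- (type D only).\<close>
datatype crit = C0 nat | C1 nat | C0p | C0m

definition CW0 :: "diag \<Rightarrow> crit set" where
  "CW0 W = {C0 n | n. n \<ge> 1} \<union> (if W = D_half_inf then {C0p, C0m} else {})"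

definition CW1 :: "diag \<Rightarrow> crit set" where
  "CW1 W = {C1 n | n. n \<ge> 1}"

definition CW :: "diag \<Rightarrow> crit set" where
  "CW W = CW0 W \<union> CW1 W"

definition adj :: "diag \<Rightarrow> crit \<Rightarrow> crit \<Rightarrow> bool" where
  "adj W c c' \<longleftrightarrow> c \<in> CW0 W \<and> c' \<in> CW1 W \<and>
     ((\<exists>n. n \<ge> 1 \<and> c = C0 n \<and> (c' = C1 n \<or> c' = C1 (n + 1))) \<or>
      (W = D_half_inf \<and> (c = C0p \<or> c = C0m) \<and> c' = C1 1))"

definition Jm :: "diag \<Rightarrow> crit \<Rightarrow> crit \<Rightarrow> complex" where
  "Jm W c c' = (if c \<in> CW W \<and> c' \<in> CW W then
       (if c = c' then 1 else if adj W c c' then -1 else 0) else 0)"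

definition tJm :: "diag \<Rightarrow> crit \<Rightarrow> crit \<Rightarrow> complex" where
  "tJm W c c' = Jm W c' c"

definition HW :: "diag \<Rightarrow> (crit \<Rightarrow> complex) set" where
  "HW W = {u. (\<forall>c. c \<notin> CW W \<longrightarrow> u c = 0) \<and> finite {c. u c \<noteq> 0}}"

definition Jform :: "(crit \<Rightarrow> crit \<Rightarrow> complex) \<Rightarrow> (crit \<Rightarrow> complex) \<Rightarrow> (crit \<Rightarrow> complex) \<Rightarrow> complex" where
  "Jform M u v = (\<Sum>c\<in>{c. u c \<noteq> 0}. \<Sum>c'\<in>{c'. v c' \<noteq> 0}. u c * v c' * M c c')"

definition gam :: "crit \<Rightarrow> crit \<Rightarrow> complex" where
  "gam c = (\<lambda>x. if x = c then 1 else 0)"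

definition Jdot :: "diag \<Rightarrow> (crit \<Rightarrow> complex) \<Rightarrow> (crit \<Rightarrow> complex)" where
  "Jdot W u = (\<lambda>c. if c \<in> CW W then Jform (Jm W) u (gam c) else 0)"

definition tJdot :: "diag \<Rightarrow> (crit \<Rightarrow> complex) \<Rightarrow> (crit \<Rightarrow> complex)" where
  "tJdot W u = (\<lambda>c. if c \<in> CW W then Jform (tJm W) u (gam c) else 0)"

text \<open>The l^2 completion of H_{W,C}, its Hermitian product and norm.\<close>
definition l2 :: "diag \<Rightarrow> (crit \<Rightarrow> complex) set" where
  "l2 W = {f. (\<forall>c. c \<notin> CW W \<longrightarrow> f c = 0) \<and> (\<lambda>c. (cmod (f c))\<^sup>2) summable_on CW W}"

definition l2inner :: "diag \<Rightarrow> (crit \<Rightarrow> complex) \<Rightarrow> (crit \<Rightarrow> complex) \<Rightarrow> complex" where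
  "l2inner W f g = (\<Sum>\<^sub>\<infinity>c\<in>CW W. f c * cnj (g c))"

definition l2norm :: "diag \<Rightarrow> (crit \<Rightarrow> complex) \<Rightarrow> real" where
  "l2norm W f = sqrt (\<Sum>\<^sub>\<infinity>c\<in>CW W. (cmod (f c))\<^sup>2)"

definition bounded_op :: "diag \<Rightarrow> ((crit \<Rightarrow> complex) \<Rightarrow> (crit \<Rightarrow> complex)) \<Rightarrow> bool" where
  "bounded_op W T \<longleftrightarrow>
     (\<forall>f\<in>l2 W. T f \<in> l2 W) \<and>
     (\<forall>f\<in>l2 W. \<forall>g\<in>l2 W. T (\<lambda>c. f c + g c) = (\<lambda>c. T f c + T g c)) \<and>
     (\<forall>a. \<forall>f\<in>l2 W. T (\<lambda>c. a * f c) = (\<lambda>c. a * T f c)) \<and>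
     (\<exists>K. \<forall>f\<in>l2 W. l2norm W (T f) \<le> K * l2norm W f)"

end

theory Submission
  imports Defs
begin


definition sq :: "(crit \<Rightarrow> complex) \<Rightarrow> bool" where
  "sq f \<longleftrightarrow> (\<lambda>c. (cmod (f c))\<^sup>2) summable_on UNIV"

definition nrm :: "(crit \<Rightarrow> complex) \<Rightarrow> real" where
  "nrm f = infsum (\<lambda>c. (cmod (f c))\<^sup>2) UNIV"

definition shift :: "crit set \<Rightarrow> (crit \<Rightarrow> crit) \<Rightarrow> (crit \<Rightarrow> complex) \<Rightarrow> crit \<Rightarrow> complex" where
  "shift D r f = (\<lambda>c. if c \<in> D then f (r c) else 0)"

lemma nrm_nonneg: "nrm f \<ge> 0"
  unfolding nrm_def by (rule infsum_nonneg) simp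

lemma sq_ineq: "(cmod (a + b))\<^sup>2 \<le> 2 * (cmod a)\<^sup>2 + 2 * (cmod b)\<^sup>2"
proof -
  have "cmod (a+b) \<le> cmod a + cmod b" by (rule norm_triangle_ineq)
  hence "(cmod (a + b))\<^sup>2 \<le> (cmod a + cmod b)\<^sup>2" by (simp add: power_mono)
  also have "\<dots> \<le> 2 * (cmod a)\<^sup>2 + 2 * (cmod b)\<^sup>2"
  proof -
    have "0 \<le> (cmod a - cmod b)\<^sup>2" by simp
    thus ?thesis by (simp add: power2_diff power2_sum)
  qed
  finally show ?thesis .
qed

lemma sq_add: assumes "sq f" "sq g" shows "sq (\<lambda>c. f c + g c)"
          and "nrm (\<lambda>c. f c + g c) \<le> 2 * nrm f + 2 * nrm g"
proof -
  have s: "(\<lambda>c. 2 * (cmod (f c))\<^sup>2 + 2 * (cmod (g c))\<^sup>2) summable_on UNIV"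
    using assms unfolding sq_def by (intro summable_on_add summable_on_cmult_right)
  show "sq (\<lambda>c. f c + g c)" unfolding sq_def
    by (rule summable_on_comparison_test[OF s]) (auto intro: sq_ineq)
  hence "nrm (\<lambda>c. f c + g c) \<le> infsum (\<lambda>c. 2 * (cmod (f c))\<^sup>2 + 2 * (cmod (g c))\<^sup>2) UNIV"
    unfolding nrm_def sq_def by (intro infsum_mono[OF _ s] sq_ineq)
  also have "\<dots> = 2 * nrm f + 2 * nrm g" unfolding nrm_def
    using assms unfolding sq_def
    by (subst infsum_add) (auto intro: summable_on_cmult_right simp: infsum_cmult_right)
  finally show "nrm (\<lambda>c. f c + g c) \<le> 2 * nrm f + 2 * nrm g" .
qed

lemma sq_cmult: assumes "sq f" shows "sq (\<lambda>c. a * f c)" and "nrm (\<lambda>c. a * f c) = (cmod a)\<^sup>2 * nrm f"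
proof -
  have e: "(\<lambda>c. (cmod (a * f c))\<^sup>2) = (\<lambda>c. (cmod a)\<^sup>2 * (cmod (f c))\<^sup>2)"
    by (simp add: norm_mult power_mult_distrib)
  show "sq (\<lambda>c. a * f c)" using assms unfolding sq_def e by (rule summable_on_cmult_right)
  show "nrm (\<lambda>c. a * f c) = (cmod a)\<^sup>2 * nrm f" unfolding nrm_def e
    by (rule infsum_cmult_right) (use assms in \<open>simp add: sq_def\<close>)
qed

lemma sq_restr: assumes "sq f" shows "sq (\<lambda>c. if c \<in> X then f c else 0)"
   and "nrm (\<lambda>c. if c \<in> X then f c else 0) \<le> nrm f"
proof -
  show "sq (\<lambda>c. if c \<in> X then f c else 0)" using assms unfolding sq_def
    by (rule summable_on_comparison_test) auto
  thus "nrm (\<lambda>c. if c \<in> X then f c else 0) \<le> nrm f" using assms unfolding nrm_def sq_def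
    by (intro infsum_mono) auto
qed

lemma sq_prod: assumes "sq f" "sq g" shows "(\<lambda>c. f c * cnj (g c)) summable_on A"
proof -
  have s: "(\<lambda>c. (cmod (f c))\<^sup>2 + (cmod (g c))\<^sup>2) summable_on UNIV"
    using assms unfolding sq_def by (intro summable_on_add)
  have "(\<lambda>c. norm (f c * cnj (g c))) summable_on UNIV"
  proof (rule summable_on_comparison_test[OF s])
    fix c
    have "cmod (f c) * cmod (g c) \<le> (cmod (f c))\<^sup>2 + (cmod (g c))\<^sup>2"
      by (smt (verit) mult_mono mult_nonneg_nonneg norm_ge_zero power2_eq_square)
    thus "norm (f c * cnj (g c)) \<le> (cmod (f c))\<^sup>2 + (cmod (g c))\<^sup>2" by (simp add: norm_mult)
  qed auto
  hence "(\<lambda>c. f c * cnj (g c)) summable_on UNIV" by (rule abs_summable_summable)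
  thus ?thesis by (rule summable_on_subset) auto
qed

lemma sq_shift: assumes inj: "inj_on r D" and f: "sq f"
  shows "sq (shift D r f)" and "nrm (shift D r f) \<le> nrm f"
proof -
  let ?q = "\<lambda>c. (cmod (f c))\<^sup>2"
  have q1: "?q summable_on (r ` D)" using f unfolding sq_def by (rule summable_on_subset) auto
  hence q2: "(?q \<circ> r) summable_on D" using summable_on_reindex[OF inj] by blast
  have eq: "infsum (\<lambda>c. (cmod (shift D r f c))\<^sup>2) UNIV = infsum (?q \<circ> r) D"
    by (rule infsum_cong_neutral) (auto simp: shift_def)
  show "sq (shift D r f)" unfolding sq_def
    by (rule summable_on_cong_neutral[THEN iffD2, OF _ _ _ q2]) (auto simp: shift_def)
  have "nrm (shift D r f) = infsum ?q (r ` D)" unfolding nrm_def eq infsum_reindex[OF inj] ..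
  also have "\<dots> \<le> nrm f" unfolding nrm_def
    by (rule infsum_mono_neutral[OF q1]) (use f in \<open>auto simp: sq_def\<close>)
  finally show "nrm (shift D r f) \<le> nrm f" .
qed

lemma adj_shift:
  assumes inj: "inj_on r D" and E: "r ` D = E" and tr: "\<And>c. c\<in>D \<Longrightarrow> t (r c) = c"
  shows "infsum (\<lambda>c. shift D r f c * cnj (g c)) UNIV = infsum (\<lambda>c. f c * cnj (shift E t g c)) UNIV"
proof -
  have "infsum (\<lambda>c. shift D r f c * cnj (g c)) UNIV = infsum (\<lambda>c. f (r c) * cnj (g c)) D"
    by (rule infsum_cong_neutral) (auto simp: shift_def)
  also have "\<dots> = infsum (\<lambda>c. f (r c) * cnj (g (t (r c)))) D" by (rule infsum_cong) (simp add: tr)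
  also have "\<dots> = infsum (\<lambda>x. f x * cnj (g (t x))) (r ` D)"
    by (subst infsum_reindex[OF inj]) (simp add: o_def)
  also have "\<dots> = infsum (\<lambda>c. f c * cnj (shift E t g c)) UNIV"
    by (rule infsum_cong_neutral) (auto simp: shift_def E)
  finally show ?thesis .
qed


lemma l2_iff: "f \<in> l2 W \<longleftrightarrow> (\<forall>c. c \<notin> CW W \<longrightarrow> f c = 0) \<and> sq f"
proof -
  have "(\<forall>c. c \<notin> CW W \<longrightarrow> f c = 0) \<Longrightarrow>
     ((\<lambda>c. (cmod (f c))\<^sup>2) summable_on CW W \<longleftrightarrow> (\<lambda>c. (cmod (f c))\<^sup>2) summable_on UNIV)"
    by (rule summable_on_cong_neutral) auto
  thus ?thesis unfolding l2_def sq_def by auto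
qed

lemma l2norm_eq: assumes "\<forall>c. c \<notin> CW W \<longrightarrow> f c = 0" shows "l2norm W f = sqrt (nrm f)"
proof -
  have "infsum (\<lambda>c. (cmod (f c))\<^sup>2) (CW W) = infsum (\<lambda>c. (cmod (f c))\<^sup>2) UNIV"
    by (rule infsum_cong_neutral) (use assms in auto)
  thus ?thesis unfolding l2norm_def nrm_def by simp
qed

lemma l2inner_eq: assumes "\<forall>c. c \<notin> CW W \<longrightarrow> g c = 0"
  shows "l2inner W f g = infsum (\<lambda>c. f c * cnj (g c)) UNIV"
  unfolding l2inner_def by (rule infsum_cong_neutral) (use assms in auto)

definition Op :: "diag \<Rightarrow> complex \<Rightarrow> ((crit \<Rightarrow> complex) \<Rightarrow> (crit \<Rightarrow> complex)) \<Rightarrow> (crit \<Rightarrow> complex) \<Rightarrow> (crit \<Rightarrow> complex)" where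
  "Op W e P f = (\<lambda>c. if c \<in> CW W then f c + e * P f c else 0)"

lemma Op_bounded:
  assumes add: "\<And>f g. P (\<lambda>c. f c + g c) = (\<lambda>c. P f c + P g c)"
    and mult: "\<And>a f. P (\<lambda>c. a * f c) = (\<lambda>c. a * P f c)"
    and psq: "\<And>f. sq f \<Longrightarrow> sq (P f)"
    and pn: "\<And>f. sq f \<Longrightarrow> nrm (P f) \<le> 16 * nrm f"
    and e: "cmod e \<le> 1"
  shows "bounded_op W (Op W e P)"
proof -
  have mem: "Op W e P f \<in> l2 W \<and> l2norm W (Op W e P f) \<le> sqrt 34 * l2norm W f" if "f \<in> l2 W" for f
  proof -
  from that have z: "\<forall>c. c \<notin> CW W \<longrightarrow> f c = 0" and f: "sq f" by (auto simp: l2_iff)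
  have s1: "sq (\<lambda>c. e * P f c)" using psq[OF f] by (rule sq_cmult)
  have s2: "sq (\<lambda>c. f c + e * P f c)" using f s1 by (rule sq_add)
  have eq: "Op W e P f = (\<lambda>c. if c \<in> CW W then f c + e * P f c else 0)" by (simp add: Op_def)
  have m: "Op W e P f \<in> l2 W" unfolding l2_iff eq using sq_restr(1)[OF s2] by auto
  have "nrm (Op W e P f) \<le> nrm (\<lambda>c. f c + e * P f c)" unfolding eq by (rule sq_restr(2)[OF s2])
  also have "\<dots> \<le> 2 * nrm f + 2 * nrm (\<lambda>c. e * P f c)" using f s1 by (rule sq_add)
  also have "nrm (\<lambda>c. e * P f c) = (cmod e)\<^sup>2 * nrm (P f)" using psq[OF f] by (rule sq_cmult)
  also have "(cmod e)\<^sup>2 * nrm (P f) \<le> 1 * (16 * nrm f)"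
  proof -
    have "(cmod e)\<^sup>2 \<le> 1" using e by (simp add: power_le_one)
    thus ?thesis using pn[OF f] nrm_nonneg[of "P f"] by (intro mult_mono) auto
  qed
  finally have "nrm (Op W e P f) \<le> 34 * nrm f" by simp
  hence "sqrt (nrm (Op W e P f)) \<le> sqrt 34 * sqrt (nrm f)"
    by (metis real_sqrt_le_mono real_sqrt_mult)
  moreover have "\<forall>c. c \<notin> CW W \<longrightarrow> Op W e P f c = 0" by (simp add: Op_def)
  ultimately have "l2norm W (Op W e P f) \<le> sqrt 34 * l2norm W f"
    using l2norm_eq z by metis
  with m show ?thesis by blast
  qed
  show ?thesis unfolding bounded_op_def
    by (intro conjI ballI allI exI[of _ "sqrt 34"])
       (use mem in \<open>auto simp: Op_def add mult fun_eq_iff algebra_simps\<close>)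
qed

lemma Op_adj:
  assumes adj: "\<And>f g. sq f \<Longrightarrow> sq g \<Longrightarrow>
        infsum (\<lambda>c. P f c * cnj (g c)) UNIV = infsum (\<lambda>c. f c * cnj (Q g c)) UNIV"
    and psq: "\<And>f. sq f \<Longrightarrow> sq (P f)" and qsq: "\<And>f. sq f \<Longrightarrow> sq (Q f)"
    and e: "cnj e = e"
    and f: "f \<in> l2 W" and g: "g \<in> l2 W"
  shows "l2inner W (Op W e P f) g = l2inner W f (Op W e Q g)"
proof -
  from f have zf: "\<forall>c. c \<notin> CW W \<longrightarrow> f c = 0" and sf: "sq f" by (auto simp: l2_iff)
  from g have zg: "\<forall>c. c \<notin> CW W \<longrightarrow> g c = 0" and sg: "sq g" by (auto simp: l2_iff)
  have "l2inner W (Op W e P f) g = infsum (\<lambda>c. Op W e P f c * cnj (g c)) UNIV"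
    using zg by (rule l2inner_eq)
  also have "\<dots> = infsum (\<lambda>c. f c * cnj (g c) + e * (P f c * cnj (g c))) UNIV"
    by (rule infsum_cong) (use zg in \<open>auto simp: Op_def algebra_simps\<close>)
  also have "\<dots> = infsum (\<lambda>c. f c * cnj (g c)) UNIV + e * infsum (\<lambda>c. P f c * cnj (g c)) UNIV"
    by (subst infsum_add, auto intro!: sq_prod summable_on_cmult_right psq sf sg,
        subst infsum_cmult_right, auto intro!: sq_prod psq sf sg)
  also have "\<dots> = infsum (\<lambda>c. f c * cnj (g c)) UNIV + e * infsum (\<lambda>c. f c * cnj (Q g c)) UNIV"
    using adj[OF sf sg] by simp
  also have "\<dots> = infsum (\<lambda>c. f c * cnj (g c) + e * (f c * cnj (Q g c))) UNIV"
    by (subst infsum_add, auto intro!: sq_prod summable_on_cmult_right qsq sf sg,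
        subst infsum_cmult_right, auto intro!: sq_prod qsq sf sg)
  also have "\<dots> = infsum (\<lambda>c. f c * cnj (Op W e Q g c)) UNIV"
  proof (rule infsum_cong)
    fix c
    have "cnj (e * Q g c) = e * cnj (Q g c)" using e by simp
    thus "f c * cnj (g c) + e * (f c * cnj (Q g c)) = f c * cnj (Op W e Q g c)"
      using zf unfolding Op_def by (cases "c \<in> CW W") (auto simp: algebra_simps)
  qed
  also have "\<dots> = l2inner W f (Op W e Q g)" by (rule l2inner_eq[symmetric]) (simp add: Op_def)
  finally show ?thesis .
qed


definition r1 :: "crit \<Rightarrow> crit" where "r1 c = (case c of C1 n \<Rightarrow> C0 n | _ \<Rightarrow> c)"
definition r2 :: "crit \<Rightarrow> crit" where "r2 c = (case c of C1 n \<Rightarrow> C0 (n - 1) | _ \<Rightarrow> c)"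
definition t1 :: "crit \<Rightarrow> crit" where "t1 c = (case c of C0 n \<Rightarrow> C1 n | _ \<Rightarrow> c)"
definition t2 :: "crit \<Rightarrow> crit" where "t2 c = (case c of C0 n \<Rightarrow> C1 (Suc n) | _ \<Rightarrow> c)"
definition D2 :: "crit set" where "D2 = {C1 n | n. 2 \<le> n}"
definition E2 :: "crit set" where "E2 = {C0 n | n. 1 \<le> n}"

definition ssum :: "(crit \<Rightarrow> complex) \<Rightarrow> crit \<Rightarrow> complex" where
  "ssum f = (\<lambda>c. shift (range C1) r1 f c + shift D2 r2 f c +
      (shift {C1 1} (\<lambda>_. C0p) f c + shift {C1 1} (\<lambda>_. C0m) f c))"
definition tsum :: "(crit \<Rightarrow> complex) \<Rightarrow> crit \<Rightarrow> complex" where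
  "tsum f = (\<lambda>c. shift (range C0) t1 f c + shift E2 t2 f c +
      (shift {C0p} (\<lambda>_. C1 1) f c + shift {C0m} (\<lambda>_. C1 1) f c))"

lemma inj1: "inj_on r1 (range C1)" by (auto simp: inj_on_def r1_def)
lemma inj2: "inj_on r2 D2" by (auto simp: inj_on_def r2_def D2_def)
lemma inj3: "inj_on t1 (range C0)" by (auto simp: inj_on_def t1_def)
lemma inj4: "inj_on t2 E2" by (auto simp: inj_on_def t2_def E2_def)
lemma im1: "r1 ` range C1 = range C0" by (auto simp: r1_def image_iff)
lemma im2: "r2 ` D2 = E2"
proof
  show "r2 ` D2 \<subseteq> E2" by (auto simp: r2_def D2_def E2_def)
  show "E2 \<subseteq> r2 ` D2"
  proof
    fix x assume "x \<in> E2"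
    then obtain n where "x = C0 n" "1 \<le> n" by (auto simp: E2_def)
    hence "x = r2 (C1 (Suc n))" "C1 (Suc n) \<in> D2" by (auto simp: r2_def D2_def)
    thus "x \<in> r2 ` D2" by blast
  qed
qed

lemma sq4: assumes "sq a" "sq b" "sq c" "sq d"
  shows "sq (\<lambda>x. a x + b x + (c x + d x))"
    and "nrm (\<lambda>x. a x + b x + (c x + d x)) \<le> 4 * (nrm a + nrm b + nrm c + nrm d)"
proof -
  have ab: "sq (\<lambda>x. a x + b x)" "nrm (\<lambda>x. a x + b x) \<le> 2 * nrm a + 2 * nrm b"
    using sq_add[OF assms(1,2)] by auto
  have cd: "sq (\<lambda>x. c x + d x)" "nrm (\<lambda>x. c x + d x) \<le> 2 * nrm c + 2 * nrm d"
    using sq_add[OF assms(3,4)] by auto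
  show "sq (\<lambda>x. a x + b x + (c x + d x))" using sq_add(1)[OF ab(1) cd(1)] .
  show "nrm (\<lambda>x. a x + b x + (c x + d x)) \<le> 4 * (nrm a + nrm b + nrm c + nrm d)"
    using sq_add(2)[OF ab(1) cd(1)] ab(2) cd(2) by simp
qed

lemma ssum_sq: assumes "sq f" shows "sq (ssum f)" "nrm (ssum f) \<le> 16 * nrm f"
proof -
  have i3: "inj_on (\<lambda>_. C0p) {C1 1}" "inj_on (\<lambda>_. C0m) {C1 1}" by auto
  note s = sq_shift[OF inj1 assms] sq_shift[OF inj2 assms] sq_shift[OF i3(1) assms] sq_shift[OF i3(2) assms]
  show "sq (ssum f)" unfolding ssum_def by (rule sq4) (use s in auto)
  show "nrm (ssum f) \<le> 16 * nrm f" unfolding ssum_def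
    using sq4(2)[of "shift (range C1) r1 f" "shift D2 r2 f" "shift {C1 1} (\<lambda>_. C0p) f" "shift {C1 1} (\<lambda>_. C0m) f"] s
    by simp
qed

lemma tsum_sq: assumes "sq f" shows "sq (tsum f)" "nrm (tsum f) \<le> 16 * nrm f"
proof -
  have i3: "inj_on (\<lambda>_. C1 1) {C0p}" "inj_on (\<lambda>_. C1 1) {C0m}" by auto
  note s = sq_shift[OF inj3 assms] sq_shift[OF inj4 assms] sq_shift[OF i3(1) assms] sq_shift[OF i3(2) assms]
  show "sq (tsum f)" unfolding tsum_def by (rule sq4) (use s in auto)
  show "nrm (tsum f) \<le> 16 * nrm f" unfolding tsum_def
    using sq4(2)[of "shift (range C0) t1 f" "shift E2 t2 f" "shift {C0p} (\<lambda>_. C1 1) f" "shift {C0m} (\<lambda>_. C1 1) f"] s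
    by simp
qed

lemma infsum4:
  fixes a b c d :: "crit \<Rightarrow> complex"
  assumes "a summable_on A" "b summable_on A" "c summable_on A" "d summable_on A"
  shows "infsum (\<lambda>x. a x + b x + (c x + d x)) A = infsum a A + infsum b A + (infsum c A + infsum d A)"
  using assms by (subst infsum_add, auto intro!: summable_on_add simp: infsum_add)

lemma ssum_adj: assumes f: "sq f" and g: "sq g"
  shows "infsum (\<lambda>c. ssum f c * cnj (g c)) UNIV = infsum (\<lambda>c. f c * cnj (tsum g c)) UNIV"
proof -
  have i3: "inj_on (\<lambda>_. C0p) {C1 1}" "inj_on (\<lambda>_. C0m) {C1 1}" by auto
  let ?a = "shift (range C1) r1 f" and ?b = "shift D2 r2 f" and ?c = "shift {C1 1} (\<lambda>_. C0p) f"
    and ?d = "shift {C1 1} (\<lambda>_. C0m) f"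
  let ?a' = "shift (range C0) t1 g" and ?b' = "shift E2 t2 g" and ?c' = "shift {C0p} (\<lambda>_. C1 1) g"
    and ?d' = "shift {C0m} (\<lambda>_. C1 1) g"
  have j3: "inj_on (\<lambda>_. C1 1) {C0p}" "inj_on (\<lambda>_. C1 1) {C0m}" by auto
  note s = sq_shift(1)[OF inj1 f] sq_shift(1)[OF inj2 f] sq_shift(1)[OF i3(1) f] sq_shift(1)[OF i3(2) f]
  note t = sq_shift(1)[OF inj3 g] sq_shift(1)[OF inj4 g] sq_shift(1)[OF j3(1) g] sq_shift(1)[OF j3(2) g]
  have "infsum (\<lambda>c. ssum f c * cnj (g c)) UNIV =
     infsum (\<lambda>c. ?a c * cnj (g c) + ?b c * cnj (g c) + (?c c * cnj (g c) + ?d c * cnj (g c))) UNIV"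
    by (simp add: ssum_def distrib_right)
  also have "\<dots> = infsum (\<lambda>c. ?a c * cnj (g c)) UNIV + infsum (\<lambda>c. ?b c * cnj (g c)) UNIV +
      (infsum (\<lambda>c. ?c c * cnj (g c)) UNIV + infsum (\<lambda>c. ?d c * cnj (g c)) UNIV)"
    by (rule infsum4) (use s g in \<open>auto intro: sq_prod\<close>)
  also have "infsum (\<lambda>c. ?a c * cnj (g c)) UNIV = infsum (\<lambda>c. f c * cnj (?a' c)) UNIV"
    by (rule adj_shift[OF inj1 im1]) (auto simp: r1_def t1_def)
  also have "infsum (\<lambda>c. ?b c * cnj (g c)) UNIV = infsum (\<lambda>c. f c * cnj (?b' c)) UNIV"
    by (rule adj_shift[OF inj2 im2]) (auto simp: r2_def t2_def D2_def)
  also have "infsum (\<lambda>c. ?c c * cnj (g c)) UNIV = infsum (\<lambda>c. f c * cnj (?c' c)) UNIV"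
    by (rule adj_shift[OF i3(1)]) auto
  also have "infsum (\<lambda>c. ?d c * cnj (g c)) UNIV = infsum (\<lambda>c. f c * cnj (?d' c)) UNIV"
    by (rule adj_shift[OF i3(2)]) auto
  also have "infsum (\<lambda>c. f c * cnj (?a' c)) UNIV + infsum (\<lambda>c. f c * cnj (?b' c)) UNIV +
      (infsum (\<lambda>c. f c * cnj (?c' c)) UNIV + infsum (\<lambda>c. f c * cnj (?d' c)) UNIV) =
      infsum (\<lambda>c. f c * cnj (?a' c) + f c * cnj (?b' c) + (f c * cnj (?c' c) + f c * cnj (?d' c))) UNIV"
    by (rule infsum4[symmetric]) (use t f in \<open>auto intro: sq_prod\<close>)
  also have "\<dots> = infsum (\<lambda>c. f c * cnj (tsum g c)) UNIV"
    by (simp add: tsum_def distrib_left)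
  finally show ?thesis .
qed

lemma ssum_add: "ssum (\<lambda>c. f c + g c) = (\<lambda>c. ssum f c + ssum g c)"
  by (simp add: ssum_def shift_def fun_eq_iff algebra_simps)
lemma ssum_mult: "ssum (\<lambda>c. a * f c) = (\<lambda>c. a * ssum f c)"
  by (simp add: ssum_def shift_def fun_eq_iff algebra_simps)
lemma tsum_add: "tsum (\<lambda>c. f c + g c) = (\<lambda>c. tsum f c + tsum g c)"
  by (simp add: tsum_def shift_def fun_eq_iff algebra_simps)
lemma tsum_mult: "tsum (\<lambda>c. a * f c) = (\<lambda>c. a * tsum f c)"
  by (simp add: tsum_def shift_def fun_eq_iff algebra_simps)

lemma bT: "bounded_op W (Op W (-1) ssum)" "bounded_op W (Op W 1 ssum)"
   "bounded_op W (Op W (-1) tsum)" "bounded_op W (Op W 1 tsum)"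
  by (rule Op_bounded; simp add: ssum_add ssum_mult ssum_sq tsum_add tsum_mult tsum_sq)+

lemma aT: "f \<in> l2 W \<Longrightarrow> g \<in> l2 W \<Longrightarrow> l2inner W (Op W e ssum f) g = l2inner W f (Op W e tsum g)"
  if "cnj e = e" for e
  by (rule Op_adj[OF ssum_adj ssum_sq(1) tsum_sq(1) that])


lemma gen_sum:
  fixes u M :: "crit \<Rightarrow> complex"
  assumes S: "finite S" and A: "finite A" and z: "\<forall>x. x \<notin> S \<longrightarrow> u x = 0"
    and h: "\<And>c'. c' \<in> S \<Longrightarrow> u c' * M c' = (if c' = c then u c' else 0) - (if c' \<in> A then u c' else 0)"
  shows "(\<Sum>c'\<in>S. u c' * M c') = u c - sum u A"
proof -
  have "(\<Sum>c'\<in>S. u c' * M c') = (\<Sum>c'\<in>S. (if c' = c then u c' else 0)) - (\<Sum>c'\<in>S. (if c' \<in> A then u c' else 0))"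
    by (subst sum_subtractf[symmetric]) (rule sum.cong, simp_all add: h)
  also have "(\<Sum>c'\<in>S. (if c' = c then u c' else 0)) = u c"
    using S z by (simp add: sum.delta') 
  also have "(\<Sum>c'\<in>S. (if c' \<in> A then u c' else 0)) = sum u (S \<inter> A)"
    using S by (simp add: sum.inter_restrict)
  also have "sum u (S \<inter> A) = sum u A"
    by (rule sum.mono_neutral_left) (use A z in auto)
  finally show ?thesis .
qed

lemma adj_ne: "adj W x y \<Longrightarrow> x \<noteq> y"
  by (auto simp: adj_def CW0_def CW1_def)

lemma adj_CW: "adj W x y \<Longrightarrow> x \<in> CW W \<and> y \<in> CW W"
  by (auto simp: adj_def CW_def)

lemma Jform_gam: "Jform M u (gam c) = (\<Sum>c'\<in>{c. u c \<noteq> 0}. u c' * M c' c)"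
proof -
  have "{x. gam c x \<noteq> 0} = {c}" by (auto simp: gam_def)
  thus ?thesis unfolding Jform_def by (simp add: gam_def)
qed

lemma ssum_match:
  assumes c: "c \<in> CW W" and z: "\<forall>x. x \<notin> CW W \<longrightarrow> u x = 0"
  shows "finite {x. adj W x c} \<and> sum u {x. adj W x c} = ssum u c"
proof (cases c)
  case (C0 n)
  have "{x. adj W x c} = {}" using C0 by (auto simp: adj_def CW1_def)
  thus ?thesis using C0 by (simp add: ssum_def shift_def D2_def image_iff)
next
  case C0p
  have "{x. adj W x c} = {}" using C0p by (auto simp: adj_def CW1_def)
  thus ?thesis using C0p by (simp add: ssum_def shift_def D2_def image_iff)
next
  case C0m
  have "{x. adj W x c} = {}" using C0m by (auto simp: adj_def CW1_def)
  thus ?thesis using C0m by (simp add: ssum_def shift_def D2_def image_iff)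
next
  case (C1 n)
  have n: "n \<ge> 1" using c C1 by (auto simp: CW_def CW0_def CW1_def split: if_splits)
  show ?thesis
  proof (cases "n = 1")
    case True
    show ?thesis
    proof (cases W)
      case A_half_inf
      have "{x. adj W x c} = {C0 1}" using C1 True A_half_inf by (auto simp: adj_def CW0_def CW1_def)
      moreover have "u C0p = 0" "u C0m = 0" using z A_half_inf by (auto simp: CW_def CW0_def CW1_def)
      ultimately show ?thesis using C1 True by (simp add: ssum_def shift_def D2_def image_iff r1_def)
    next
      case D_half_inf
      have "{x. adj W x c} = {C0 1, C0p, C0m}" using C1 True D_half_inf by (auto simp: adj_def CW0_def CW1_def)
      thus ?thesis using C1 True by (simp add: ssum_def shift_def D2_def image_iff r1_def)
    qed
  next
    case False
    hence n2: "n \<ge> 2" using n by simp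
    have "{x. adj W x c} = {C0 n, C0 (n - 1)}" using C1 n2
      by (auto simp: adj_def CW0_def CW1_def)
    thus ?thesis using C1 n2 by (simp add: ssum_def shift_def D2_def image_iff r1_def r2_def)
  qed
qed

lemma tsum_match:
  assumes c: "c \<in> CW W" and z: "\<forall>x. x \<notin> CW W \<longrightarrow> u x = 0"
  shows "finite {x. adj W c x} \<and> sum u {x. adj W c x} = tsum u c"
proof (cases c)
  case (C0 n)
  have n: "n \<ge> 1" using c C0 by (auto simp: CW_def CW0_def CW1_def split: if_splits)
  have "{x. adj W c x} = {C1 n, C1 (Suc n)}" using C0 n by (auto simp: adj_def CW0_def CW1_def)
  thus ?thesis using C0 n by (simp add: tsum_def shift_def E2_def image_iff t1_def t2_def)
next
  case C0p
  have "W = D_half_inf" using c C0p by (auto simp: CW_def CW0_def CW1_def split: if_splits)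
  hence "{x. adj W c x} = {C1 1}" using C0p by (auto simp: adj_def CW0_def CW1_def)
  thus ?thesis using C0p by (simp add: tsum_def shift_def E2_def image_iff)
next
  case C0m
  have "W = D_half_inf" using c C0m by (auto simp: CW_def CW0_def CW1_def split: if_splits)
  hence "{x. adj W c x} = {C1 1}" using C0m by (auto simp: adj_def CW0_def CW1_def)
  thus ?thesis using C0m by (simp add: tsum_def shift_def E2_def image_iff)
next
  case (C1 n)
  have "{x. adj W c x} = {}" using C1 by (auto simp: adj_def CW0_def)
  thus ?thesis using C1 by (simp add: tsum_def shift_def E2_def image_iff)
qed

lemma Jdot_eq: assumes u: "u \<in> HW W" shows "Jdot W u = Op W (-1) ssum u"
proof
  fix c
  from u have z: "\<forall>x. x \<notin> CW W \<longrightarrow> u x = 0" and fin: "finite {c. u c \<noteq> 0}" by (auto simp: HW_def)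
  show "Jdot W u c = Op W (-1) ssum u c"
  proof (cases "c \<in> CW W")
    case True
    note m = ssum_match[OF True z]
    have "(\<Sum>c'\<in>{c. u c \<noteq> 0}. u c' * Jm W c' c) = u c - sum u {x. adj W x c}"
    proof (rule gen_sum[OF fin conjunct1[OF m]])
      show "\<forall>x. x \<notin> {c. u c \<noteq> 0} \<longrightarrow> u x = 0" by auto
      fix c' assume "c' \<in> {c. u c \<noteq> 0}"
      hence "c' \<in> CW W" using z by auto
      thus "u c' * Jm W c' c = (if c' = c then u c' else 0) - (if c' \<in> {x. adj W x c} then u c' else 0)"
        using True adj_ne[of W c' c] by (auto simp: Jm_def)
    qed
    thus ?thesis using True m by (simp add: Jdot_def Jform_gam Op_def)
  next
    case False thus ?thesis by (simp add: Jdot_def Op_def)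
  qed
qed

lemma tJdot_eq: assumes u: "u \<in> HW W" shows "tJdot W u = Op W (-1) tsum u"
proof
  fix c
  from u have z: "\<forall>x. x \<notin> CW W \<longrightarrow> u x = 0" and fin: "finite {c. u c \<noteq> 0}" by (auto simp: HW_def)
  show "tJdot W u c = Op W (-1) tsum u c"
  proof (cases "c \<in> CW W")
    case True
    note m = tsum_match[OF True z]
    have "(\<Sum>c'\<in>{c. u c \<noteq> 0}. u c' * tJm W c' c) = u c - sum u {x. adj W c x}"
    proof (rule gen_sum[OF fin conjunct1[OF m]])
      show "\<forall>x. x \<notin> {c. u c \<noteq> 0} \<longrightarrow> u x = 0" by auto
      fix c' assume "c' \<in> {c. u c \<noteq> 0}"
      hence "c' \<in> CW W" using z by auto
      thus "u c' * tJm W c' c = (if c' = c then u c' else 0) - (if c' \<in> {x. adj W c x} then u c' else 0)"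
        using True adj_ne[of W c c'] by (auto simp: tJm_def Jm_def)
    qed
    thus ?thesis using True m by (simp add: tJdot_def Jform_gam Op_def)
  next
    case False thus ?thesis by (simp add: tJdot_def Op_def)
  qed
qed

lemma fin_shift: assumes "inj_on r D" "finite {c. u c \<noteq> 0}"
  shows "finite {c. shift D r u c \<noteq> 0}"
proof -
  have "{c. shift D r u c \<noteq> 0} \<subseteq> r -` {c. u c \<noteq> 0} \<inter> D" by (auto simp: shift_def split: if_splits)
  thus ?thesis using finite_vimage_IntI[OF assms(2,1)] by (rule finite_subset)
qed

lemma fin4: assumes "finite {c. a c \<noteq> 0}" "finite {c. b c \<noteq> 0}" "finite {c. (cc::crit\<Rightarrow>complex) c \<noteq> 0}" "finite {c. d c \<noteq> 0}"
  shows "finite {c. a c + b c + (cc c + d c) \<noteq> 0}"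
proof -
  have "{c. a c + b c + (cc c + d c) \<noteq> 0} \<subseteq> {c. a c \<noteq> 0} \<union> {c. b c \<noteq> 0} \<union> {c. cc c \<noteq> 0} \<union> {c. d c \<noteq> 0}"
    by auto
  thus ?thesis using assms by (auto intro: finite_subset)
qed

lemma ssum_fin: "finite {c. u c \<noteq> 0} \<Longrightarrow> finite {c. ssum u c \<noteq> 0}"
  unfolding ssum_def by (intro fin4 fin_shift inj1 inj2) auto

lemma tsum_fin: "finite {c. u c \<noteq> 0} \<Longrightarrow> finite {c. tsum u c \<noteq> 0}"
  unfolding tsum_def by (intro fin4 fin_shift inj3 inj4) auto

lemma Op_HW: assumes u: "u \<in> HW W" and P: "finite {c. P u c \<noteq> 0}" shows "Op W e P u \<in> HW W"
proof -
  have "{c. Op W e P u c \<noteq> 0} \<subseteq> {c. u c \<noteq> 0} \<union> {c. P u c \<noteq> 0}" by (auto simp: Op_def)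
  hence "finite {c. Op W e P u c \<noteq> 0}" using u P unfolding HW_def by (auto intro: finite_subset)
  thus ?thesis unfolding HW_def by (auto simp: Op_def)
qed

lemma Op_inv:
  assumes z: "\<forall>x. x \<notin> CW W \<longrightarrow> u x = 0"
    and P0: "\<And>f c. c \<in> Z \<Longrightarrow> P f c = 0"
    and Pr: "\<And>f g. (\<And>c. c \<in> Z \<Longrightarrow> f c = g c) \<Longrightarrow> P f = P g"
  shows "Op W e P (Op W (-e) P u) = u"
proof -
  have "P (Op W (-e) P u) = P u" by (rule Pr) (use z P0 in \<open>auto simp: Op_def\<close>)
  thus ?thesis using z by (auto simp: Op_def fun_eq_iff)
qed

lemma ssum0: "c \<in> - range C1 \<Longrightarrow> ssum f c = 0"
  by (auto simp: ssum_def shift_def D2_def image_iff)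
lemma ssumr: "(\<And>c. c \<in> - range C1 \<Longrightarrow> f c = g c) \<Longrightarrow> ssum f = ssum g"
  by (auto simp: ssum_def shift_def D2_def image_iff r1_def r2_def fun_eq_iff)
lemma tsum0: "c \<in> range C1 \<Longrightarrow> tsum f c = 0"
  by (auto simp: tsum_def shift_def E2_def image_iff)
lemma tsumr: "(\<And>c. c \<in> range C1 \<Longrightarrow> f c = g c) \<Longrightarrow> tsum f = tsum g"
  by (auto simp: tsum_def shift_def E2_def image_iff t1_def t2_def fun_eq_iff)


lemma HW_z: "u \<in> HW W \<Longrightarrow> \<forall>x. x \<notin> CW W \<longrightarrow> u x = 0" by (simp add: HW_def)
lemma HW_f: "u \<in> HW W \<Longrightarrow> finite {c. u c \<noteq> 0}" by (simp add: HW_def)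

lemma ssum_inv: "u \<in> HW W \<Longrightarrow> Op W 1 ssum (Op W (-1) ssum u) = u"
    "u \<in> HW W \<Longrightarrow> Op W (-1) ssum (Op W 1 ssum u) = u"
  using Op_inv[of W u "- range C1" ssum 1, OF HW_z ssum0 ssumr]
        Op_inv[of W u "- range C1" ssum "-1", OF HW_z ssum0 ssumr] by auto

lemma tsum_inv: "u \<in> HW W \<Longrightarrow> Op W 1 tsum (Op W (-1) tsum u) = u"
    "u \<in> HW W \<Longrightarrow> Op W (-1) tsum (Op W 1 tsum u) = u"
  using Op_inv[of W u "range C1" tsum 1, OF HW_z tsum0 tsumr]
        Op_inv[of W u "range C1" tsum "-1", OF HW_z tsum0 tsumr] by auto

lemma ssum_HW: "u \<in> HW W \<Longrightarrow> Op W e ssum u \<in> HW W"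
  by (rule Op_HW) (auto intro: ssum_fin HW_f)
lemma tsum_HW: "u \<in> HW W \<Longrightarrow> Op W e tsum u \<in> HW W"
  by (rule Op_HW) (auto intro: tsum_fin HW_f)

lemma bijJ: "bij_betw (Jdot W) (HW W) (HW W)"
  by (rule bij_betw_byWitness[where f' = "Op W 1 ssum"])
     (auto simp: Jdot_eq ssum_HW ssum_inv)
lemma bijtJ: "bij_betw (tJdot W) (HW W) (HW W)"
  by (rule bij_betw_byWitness[where f' = "Op W 1 tsum"])
     (auto simp: tJdot_eq tsum_HW tsum_inv)

lemma invJ: "u \<in> HW W \<Longrightarrow> inv_into (HW W) (Jdot W) u = Op W 1 ssum u"
  by (rule inv_into_f_eq[OF bij_betw_imp_inj_on[OF bijJ]]) (auto simp: Jdot_eq ssum_HW ssum_inv)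
lemma invtJ: "u \<in> HW W \<Longrightarrow> inv_into (HW W) (tJdot W) u = Op W 1 tsum u"
  by (rule inv_into_f_eq[OF bij_betw_imp_inj_on[OF bijtJ]]) (auto simp: tJdot_eq tsum_HW tsum_inv)

theorem mainTheorem7:
  fixes W :: diag
  shows "bij_betw (Jdot W) (HW W) (HW W) \<and> bij_betw (tJdot W) (HW W) (HW W) \<and>
    (\<exists>T tT S tS.
       bounded_op W T \<and> bounded_op W tT \<and> bounded_op W S \<and> bounded_op W tS \<and>
       (\<forall>u\<in>HW W. T u = Jdot W u) \<and>
       (\<forall>u\<in>HW W. tT u = tJdot W u) \<and>
       (\<forall>u\<in>HW W. S u = inv_into (HW W) (Jdot W) u) \<and>
       (\<forall>u\<in>HW W. tS u = inv_into (HW W) (tJdot W) u) \<and>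
       (\<forall>f\<in>l2 W. \<forall>g\<in>l2 W. l2inner W (T f) g = l2inner W f (tT g)) \<and>
       (\<forall>f\<in>l2 W. \<forall>g\<in>l2 W. l2inner W (S f) g = l2inner W f (tS g)))"
proof -
  let ?T = "Op W (-1) ssum" and ?tT = "Op W (-1) tsum" and ?S = "Op W 1 ssum" and ?tS = "Op W 1 tsum"
  have "bounded_op W ?T \<and> bounded_op W ?tT \<and> bounded_op W ?S \<and> bounded_op W ?tS \<and>
       (\<forall>u\<in>HW W. ?T u = Jdot W u) \<and>
       (\<forall>u\<in>HW W. ?tT u = tJdot W u) \<and>
       (\<forall>u\<in>HW W. ?S u = inv_into (HW W) (Jdot W) u) \<and>
       (\<forall>u\<in>HW W. ?tS u = inv_into (HW W) (tJdot W) u) \<and>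
       (\<forall>f\<in>l2 W. \<forall>g\<in>l2 W. l2inner W (?T f) g = l2inner W f (?tT g)) \<and>
       (\<forall>f\<in>l2 W. \<forall>g\<in>l2 W. l2inner W (?S f) g = l2inner W f (?tS g))"
    by (intro conjI bT ballI) (simp_all add: Jdot_eq tJdot_eq invJ invtJ aT)
  thus ?thesis using bijJ bijtJ by blast
qed

end
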